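(* Consider $n$ agents indexed by $\mathcal{V}=\{1,\dots,n\}$ with Lagrangian dynamics $$M_i(q_i)\ddot q_i+C_i(q_i,\dot q_i)\dot q_i=\tau_i,\qquad i\in\mathcal{V},$$ where $q_i\in\mathbb{R}^m$, and for each $i$: $M_i(q_i)$ is symmetric positive definite and bounded for all $q_i$; $\dot M_i(q_i)-2C_i(q_i,\dot q_i)$ is skew symmetric; and there is $k_C>0$ with $\|C_i(q_i,\dot q_i)\|\le k_C\|\dot q_i\|$, $C_i$ bounded in $q_i$. Let $\mathcal{X}_1,\dots,\mathcal{X}_n\subseteq\mathbb{R}^m$ be closed convex sets such that $\mathcal{X}_0=\bigcap_{i=1}^n\mathcal{X}_i$ is nonempty and bounded. Let $\mathcal{G}=(\mathcal{V},\mathcal{E})$ be a fixed undirected graph with neighbor sets $\mathcal{N}_i=\{j:\{j,i\}\in\mathcal{E}\}$ and weights $a_{ij}=a_{ji}>0$ for $\{j,i\}\in\mathcal{E}$. Apply the control $$\tau_i=-k\dot q_i-(q_i-P_{\mathcal{X}_i}(q_i))-\sum_{j\in\mathcal{N}_i}a_{ij}(q_i-q_j),\qquad i\in\mathcal{V},$$ with $k>0$. If $\mathcal{G}$ is connected, then the closed-loop system achieves cooperative set aggregation: for every solution, $\lim_{t\to\infty}\|q_i(t)\|_{\mathcal{X}_0}=0$ for all $i$, $\lim_{t\to\infty}(q_i(t)-q_j(t))=0$ for all $i,j$, and $\lim_{t\to\infty}\dot q_i(t)=0$ for all $i$.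
   Context: $\|\cdot\|$ is the Euclidean norm. For a nonempty set $\mathcal{S}\subseteq\mathbb{R}^m$, $\|x\|_{\mathcal{S}}=\inf_{y\in\mathcal{S}}\|x-y\|$. For a closed convex set $\mathcal{S}$, $P_{\mathcal{S}}(x)\in\mathcal{S}$ denotes the Euclidean projection of $x$ onto $\mathcal{S}$, i.e. the point with $\|x-P_{\mathcal{S}}(x)\|=\|x\|_{\mathcal{S}}$. A graph is connected if every pair of nodes is joined by a path. *)

theory Defs
  imports "HOL-Analysis.Analysis"
begin

definition graph_connected :: "nat set \<Rightarrow> nat set set \<Rightarrow> bool" where
  "graph_connected V E \<longleftrightarrow> (\<forall>i\<in>V. \<forall>j\<in>V. (\<lambda>x y. {x, y} \<in> E)\<^sup>*\<^sup>* i j)"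

definition nbrs :: "nat set set \<Rightarrow> nat \<Rightarrow> nat set" where
  "nbrs E i = {j. {j, i} \<in> E}"

definition mnorm :: "real^'m^'k \<Rightarrow> real" where
  "mnorm A = onorm (\<lambda>x. A *v x)"

end

theory Submission
  imports Defs
begin

lemma bb_mv: "bounded_bilinear (\<lambda>(A::real^'n^'m) (x::real^'n). A *v x)"
proof -
  have "bilinear (\<lambda>(A::real^'n^'m) (x::real^'n). A *v x)"
    unfolding bilinear_def
    by (auto simp: linear_iff matrix_vector_right_distrib matrix_vector_mult_add_rdistrib matrix_vector_mult_scaleR  matrix_scaleR_vector_ac  scaleR_matrix_vector_assoc)
  thus ?thesis using bilinear_conv_bounded_bilinear by blast
qed

lemma skew_quad:
  fixes S :: "real^'n^'n"
  assumes "transpose S = - S" shows "x \<bullet> (S *v x) = 0"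
proof -
  have "x \<bullet> (S *v x) = (x v* S) \<bullet> x" by (simp add: dot_lmul_matrix)
  also have "x v* S = transpose S *v x" by simp
  also have "\<dots> = - (S *v x)" using assms by (simp add: vec_eq_iff matrix_vector_mult_def sum_negf)
  finally show ?thesis by (simp add: inner_commute)
qed

lemma sym_quad:
  fixes A :: "real^'n^'n"
  assumes "transpose A = A" shows "x \<bullet> (A *v y) = y \<bullet> (A *v x)"
proof -
  have "x \<bullet> (A *v y) = (x v* A) \<bullet> y" by (simp add: dot_lmul_matrix)
  also have "x v* A = transpose A *v x" by simp
  finally show ?thesis using assms by (simp add: inner_commute)
qed

lemma sqdist_bound:
  fixes S :: "'a::euclidean_space set"
  assumes S: "closed S" "convex S" "S \<noteq> {}"
  shows "\<bar>(norm (y - closest_point S y))^2 - (norm (x - closest_point S x))^2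
          - 2 * ((x - closest_point S x) \<bullet> (y - x))\<bar> \<le> 5 * (norm (y - x))^2"
proof -
  define p where "p = closest_point S x"
  define p' where "p' = closest_point S y"
  define h where "h = y - x"
  define u where "u = x - p"
  define u' where "u' = y - p'"
  have pS: "p \<in> S" "p' \<in> S" unfolding p_def p'_def using S closest_point_in_set by auto
  have "dist y p' \<le> dist y p" unfolding p'_def using closest_point_le S pS by auto
  hence "norm u' \<le> norm (u + h)" unfolding u'_def u_def h_def dist_norm by (simp add: algebra_simps)
  hence up: "u' \<bullet> u' \<le> (u + h) \<bullet> (u + h)" by (simp add: dot_square_norm power_mono)
  have "dist x p \<le> dist x p'" unfolding p_def using closest_point_le S pS by auto
  hence "norm u \<le> norm (u' - h)" unfolding u'_def u_def h_def dist_norm by (simp add: algebra_simps)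
  hence lo: "u \<bullet> u \<le> (u' - h) \<bullet> (u' - h)" by (simp add: dot_square_norm power_mono)
  have lip: "norm (p' - p) \<le> norm h" unfolding p_def p'_def h_def
    using closest_point_lipschitz[OF S(2,1,3), of y x] by (simp add: dist_norm)
  define d where "d = u' - u"
  have "d = h - (p' - p)" unfolding d_def u'_def u_def h_def by simp
  hence dn: "norm d \<le> 2 * norm h" using lip norm_triangle_ineq4[of h "p' - p"] by simp
  have cs: "\<bar>d \<bullet> h\<bar> \<le> norm d * norm h" by (rule Cauchy_Schwarz_ineq2)
  have e1: "u' \<bullet> u' - u \<bullet> u - 2 * (u \<bullet> h) \<le> h \<bullet> h" using up
    by (simp add: inner_add inner_commute)
  have e2: "u' \<bullet> u' - u \<bullet> u - 2 * (u \<bullet> h) \<ge> 2 * (d \<bullet> h) - h \<bullet> h" using lo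
    unfolding d_def by (simp add: inner_diff inner_commute)
  have hh: "h \<bullet> h = (norm h)^2" by (simp add: dot_square_norm)
  have "norm d * norm h \<le> 2 * (norm h)^2" using mult_right_mono[OF dn norm_ge_zero[of h]] by (simp add: power2_eq_square)
  hence "d \<bullet> h \<ge> - (2 * (norm h)^2)" using cs by linarith
  hence "\<bar>u' \<bullet> u' - u \<bullet> u - 2 * (u \<bullet> h)\<bar> \<le> 5 * (norm h)^2" using e1 e2 hh
    by linarith
  thus ?thesis unfolding u_def u'_def p_def p'_def h_def by (simp add: dot_square_norm)
qed

lemma sqdist_deriv:
  fixes S :: "'a::euclidean_space set"
  assumes S: "closed S" "convex S" "S \<noteq> {}"
  shows "((\<lambda>y. (norm (y - closest_point S y))^2) has_derivative
           (\<lambda>h. 2 * ((x - closest_point S x) \<bullet> h))) (at x)"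
  unfolding has_derivative_at_alt
proof (intro conjI allI impI)
  show "bounded_linear (\<lambda>h. 2 * ((x - closest_point S x) \<bullet> h))"
    by (intro bounded_linear_intros)
  fix e :: real assume e: "e > 0"
  show "\<exists>d>0. \<forall>y. norm (y - x) < d \<longrightarrow>
    norm ((norm (y - closest_point S y))\<^sup>2 - (norm (x - closest_point S x))\<^sup>2 -
     2 * ((x - closest_point S x) \<bullet> (y - x))) \<le> e * norm (y - x)"
  proof (intro exI[of _ "e/5"] conjI allI impI)
    show "e/5 > 0" using e by simp
    fix y assume y: "norm (y - x) < e / 5"
    have "5 * norm (y - x) \<le> e" using y by simp
    hence "(5 * norm (y - x)) * norm (y - x) \<le> e * norm (y - x)"
      by (rule mult_right_mono) simp
    hence "5 * (norm (y - x))^2 \<le> e * norm (y - x)" by (simp add: power2_eq_square mult.assoc)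
    thus "norm ((norm (y - closest_point S y))\<^sup>2 - (norm (x - closest_point S x))\<^sup>2 -
     2 * ((x - closest_point S x) \<bullet> (y - x))) \<le> e * norm (y - x)"
      using sqdist_bound[OF S, of y x] unfolding real_norm_def by linarith
  qed
qed


lemma chain_vd:
  assumes "(f has_vector_derivative f') (at t)" "(g has_derivative g') (at (f t))"
  shows "((\<lambda>s. g (f s)) has_vector_derivative g' f') (at t)"
  using vector_derivative_diff_chain_within[of f f' t UNIV g g'] assms
    has_derivative_at_withinI[OF assms(2)] by (simp add: o_def)

lemma pos_min:
  fixes h :: "'a::metric_space \<Rightarrow> real"
  assumes "compact K" "continuous_on K h" "\<And>x. x\<in>K \<Longrightarrow> h x > 0"
  shows "\<exists>m>0. \<forall>x\<in>K. m \<le> h x"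
proof (cases "K = {}")
  case True thus ?thesis by (intro exI[of _ 1]) auto
next
  case False
  obtain x0 where "x0 \<in> K" "\<forall>x\<in>K. h x0 \<le> h x"
    using continuous_attains_inf[OF assms(1) False assms(2)] by blast
  thus ?thesis using assms(3) by blast
qed

lemma infdist_cp:
  assumes "closed S" "S \<noteq> {}"
  shows "infdist x S = dist x (closest_point S x)"
  using setdist_closest_point[OF assms] by (simp add: infdist_eq_setdist)

lemma sum_swap_sym:
  assumes "finite V"
  shows "(\<Sum>i\<in>V. \<Sum>j\<in>{j\<in>V. {j,i}\<in>E}. f i j) = (\<Sum>i\<in>V. \<Sum>j\<in>{j\<in>V. {j,i}\<in>E}. f j i)"
  using sum.swap_restrict[OF assms assms, of "\<lambda>i j. f i j" "\<lambda>i j. {j,i}\<in>E"]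
  by (simp add: insert_commute)

lemma coercive:
  fixes X :: "nat \<Rightarrow> 'a::euclidean_space set"
  assumes fin: "finite I" and cl: "\<And>i. i\<in>I \<Longrightarrow> closed (X i)" and cv: "\<And>i. i\<in>I \<Longrightarrow> convex (X i)"
    and ne: "(\<Inter>i\<in>I. X i) \<noteq> {}" and bd: "bounded (\<Inter>i\<in>I. X i)"
  shows "\<exists>R. \<forall>x. (\<forall>i\<in>I. infdist x (X i) \<le> D) \<longrightarrow> norm x \<le> R"
proof -
  obtain x0 where x0: "x0 \<in> (\<Inter>i\<in>I. X i)" using ne by blast
  obtain r where r: "r > 0" "(\<Inter>i\<in>I. X i) \<subseteq> ball x0 r"
    using bounded_subset_ballD[OF bd] by blast
  have Xne: "X i \<noteq> {}" if "i \<in> I" for i using x0 that by blast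
  define h where "h y = (\<Sum>i\<in>I. infdist y (X i))" for y
  have hc: "continuous_on (sphere x0 r) h" unfolding h_def
    by (intro continuous_intros)
  have hpos: "h y > 0" if y: "y \<in> sphere x0 r" for y
  proof (rule ccontr)
    assume "\<not> h y > 0"
    moreover have "h y \<ge> 0" unfolding h_def by (simp add: sum_nonneg infdist_nonneg)
    ultimately have "h y = 0" by linarith
    hence all0: "\<forall>i\<in>I. infdist y (X i) = 0" unfolding h_def
      by (subst (asm) sum_nonneg_eq_0_iff[OF fin]) (auto simp: infdist_nonneg)
    have "y \<in> X i" if i: "i \<in> I" for i
      using in_closed_iff_infdist_zero[OF cl[OF i] Xne[OF i], of y] all0 i by simp
    hence "y \<in> ball x0 r" using r(2) by blast
    thus False using y by simp
  qed
  obtain m where m: "m > 0" "\<forall>y\<in>sphere x0 r. m \<le> h y"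
    using pos_min[OF compact_sphere hc hpos] by blast
  show ?thesis
  proof (intro exI allI impI)
    fix x assume xD: "\<forall>i\<in>I. infdist x (X i) \<le> D"
    show "norm x \<le> norm x0 + max r (real (card I) * r * D / m)"
    proof (cases "norm (x - x0) \<le> r")
      case True
      thus ?thesis using norm_triangle_ineq2[of x x0] by linarith
    next
      case False
      define L where "L = norm (x - x0)"
      have L: "L > r" using False L_def by simp
      define \<theta> where "\<theta> = r / L"
      have th: "0 < \<theta>" "\<theta> < 1" unfolding \<theta>_def using L r by auto
      define y where "y = x0 + \<theta> *\<^sub>R (x - x0)"
      have "norm (y - x0) = \<theta> * L" unfolding y_def L_def using th by simp
      hence ys: "y \<in> sphere x0 r" unfolding \<theta>_def using L r by (simp add: dist_norm norm_minus_commute)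
      have yi: "infdist y (X i) \<le> \<theta> * D" if i: "i \<in> I" for i
      proof -
        define p where "p = closest_point (X i) x"
        have pX: "p \<in> X i" unfolding p_def using closest_point_in_set[OF cl[OF i] Xne[OF i]] .
        have dxp: "dist x p = infdist x (X i)" unfolding p_def using infdist_cp[OF cl[OF i] Xne[OF i]] by simp
        define z where "z = (1 - \<theta>) *\<^sub>R x0 + \<theta> *\<^sub>R p"
        have zX: "z \<in> X i" unfolding z_def using convexD[OF cv[OF i], of x0 p "1-\<theta>" \<theta>] x0 pX th i by auto
        have "y - z = \<theta> *\<^sub>R (x - p)" unfolding y_def z_def by (simp add: algebra_simps)
        hence "dist y z = \<theta> * dist x p" using th by (simp add: dist_norm)
        hence "infdist y (X i) \<le> \<theta> * infdist x (X i)" using infdist_le[OF zX, of y] dxp by simp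
        also have "\<dots> \<le> \<theta> * D" using xD i th by (simp add: mult_left_mono)
        finally show ?thesis .
      qed
      have "m \<le> h y" using m ys by blast
      also have "h y \<le> (\<Sum>i\<in>I. \<theta> * D)" unfolding h_def by (rule sum_mono) (use yi in blast)
      also have "\<dots> = real (card I) * (r / L) * D" unfolding \<theta>_def by simp
      finally have "m \<le> real (card I) * r * D / L" by simp
      hence "m * L \<le> real (card I) * r * D" using L r by (simp add: field_simps)
      hence "L \<le> real (card I) * r * D / m" using m by (simp add: field_simps)
      thus ?thesis using norm_triangle_ineq2[of x x0] unfolding L_def by linarith
    qed
  qed
qed



lemma antisym_sum:
  fixes x z :: "nat \<Rightarrow> 'a::real_inner"
  assumes fin: "finite V" and asym: "\<And>i j. {j,i}\<in>E \<Longrightarrow> a i j = a j i"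
  shows "(\<Sum>i\<in>V. \<Sum>j\<in>{j\<in>V. {j,i}\<in>E}. a i j * ((x i - x j) \<bullet> z j))
       = - (\<Sum>i\<in>V. \<Sum>j\<in>{j\<in>V. {j,i}\<in>E}. a i j * ((x i - x j) \<bullet> z i))"
proof -
  have "(\<Sum>i\<in>V. \<Sum>j\<in>{j\<in>V. {j,i}\<in>E}. a i j * ((x i - x j) \<bullet> z j))
      = (\<Sum>i\<in>V. \<Sum>j\<in>{j\<in>V. {j,i}\<in>E}. a j i * ((x j - x i) \<bullet> z i))"
    by (rule sum_swap_sym[OF fin])
  also have "\<dots> = (\<Sum>i\<in>V. \<Sum>j\<in>{j\<in>V. {j,i}\<in>E}. - (a i j * ((x i - x j) \<bullet> z i)))"
  proof (rule sum.cong[OF refl], rule sum.cong[OF refl])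
    fix i j assume "j \<in> {j\<in>V. {j,i}\<in>E}"
    hence "a j i = a i j" using asym[of j i] by simp
    thus "a j i * ((x j - x i) \<bullet> z i) = - (a i j * ((x i - x j) \<bullet> z i))"
      by (simp add: inner_diff_left algebra_simps)
  qed
  also have "\<dots> = - (\<Sum>i\<in>V. \<Sum>j\<in>{j\<in>V. {j,i}\<in>E}. a i j * ((x i - x j) \<bullet> z i))"
    by (simp add: sum_negf)
  finally show ?thesis .
qed

lemma smv: "((c::real) *\<^sub>R (A::real^'n^'m)) *v x = c *\<^sub>R (A *v x)"
  by (simp add: vec_eq_iff matrix_vector_mult_def sum_distrib_left algebra_simps)

lemma mvt_vec:
  fixes f :: "real \<Rightarrow> 'a::real_normed_vector"
  assumes ab: "a \<le> b" and d: "\<And>s. a \<le> s \<Longrightarrow> s \<le> b \<Longrightarrow> (f has_vector_derivative f' s) (at s)"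
    and B: "\<And>s. a \<le> s \<Longrightarrow> s \<le> b \<Longrightarrow> norm (f' s) \<le> B"
  shows "norm (f b - f a) \<le> B * (b - a)"
proof -
  have "norm (f b - f a) \<le> B * norm (b - a)"
  proof (rule differentiable_bound[of "{a..b}" f "\<lambda>s h. h *\<^sub>R f' s" B b a])
    show "convex {a..b}" by simp
    fix x assume x: "x \<in> {a..b}"
    show "(f has_derivative (\<lambda>h. h *\<^sub>R f' x)) (at x within {a..b})"
      using d[of x] x has_derivative_at_withinI unfolding has_vector_derivative_def by auto
    have "onorm (\<lambda>h. h *\<^sub>R f' x) = onorm (\<lambda>h::real. h) * norm (f' x)"
      by (rule onorm_scaleR_left) simp
    also have "\<dots> = norm (f' x)" by (simp add: onorm_id)
    finally show "onorm (\<lambda>h. h *\<^sub>R f' x) \<le> B" using B[of x] x by simp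
  qed (use ab in auto)
  thus ?thesis using ab by simp
qed

lemma dec_helper:
  fixes f :: "real \<Rightarrow> real"
  assumes "a \<le> b" "\<And>s. a \<le> s \<Longrightarrow> s \<le> b \<Longrightarrow> (f has_real_derivative f' s) (at s)"
    "\<And>s. a \<le> s \<Longrightarrow> s \<le> b \<Longrightarrow> f' s \<le> 0"
  shows "f b \<le> f a"
  using DERIV_nonpos_imp_nonincreasing[of a b f] assms by blast


lemma tendsto0I:
  fixes f :: "real \<Rightarrow> 'a::real_normed_vector"
  assumes "\<And>e. e > 0 \<Longrightarrow> \<exists>T. \<forall>t\<ge>T. norm (f t) < e"
  shows "(f \<longlongrightarrow> 0) at_top"
  unfolding tendsto_iff eventually_at_top_linorder using assms by (simp add: dist_norm)

lemma tendsto0D: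
  fixes f :: "real \<Rightarrow> 'a::real_normed_vector"
  assumes "(f \<longlongrightarrow> 0) at_top" "e > 0"
  shows "\<exists>T. \<forall>t\<ge>T. norm (f t) < e"
  using assms unfolding tendsto_iff eventually_at_top_linorder by (simp add: dist_norm)

lemma unif_bound:
  fixes f :: "nat \<Rightarrow> real \<Rightarrow> real"
  assumes fin: "finite V" and b: "\<And>i. i\<in>V \<Longrightarrow> \<exists>R. \<forall>t\<ge>c. f i t \<le> R"
  shows "\<exists>R. \<forall>i\<in>V. \<forall>t\<ge>c. f i t \<le> R"
proof -
  have "\<forall>i\<in>V. \<exists>R. \<forall>t\<ge>c. f i t \<le> R" using b by blast
  from bchoice[OF this] obtain R where R: "\<forall>i\<in>V. \<forall>t\<ge>c. f i t \<le> R i" by blast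
  show ?thesis
  proof (intro exI ballI allI impI)
    fix i t assume i: "i \<in> V" and t: "c \<le> t"
    have "\<bar>R i\<bar> \<le> (\<Sum>j\<in>V. \<bar>R j\<bar>)" by (rule member_le_sum) (use i fin in auto)
    moreover have "f i t \<le> R i" using R i t by blast
    ultimately show "f i t \<le> (\<Sum>j\<in>V. \<bar>R j\<bar>)" by linarith
  qed
qed

lemma sandwich0:
  fixes f h :: "real \<Rightarrow> real"
  assumes h: "(h \<longlongrightarrow> 0) at_top" and b: "\<And>t. t \<ge> c \<Longrightarrow> 0 \<le> f t \<and> (f t)^2 \<le> h t"
  shows "(f \<longlongrightarrow> 0) at_top"
proof (rule tendsto0I)
  fix e :: real assume e: "e > 0"
  have e2: "e^2 > 0" using e by simp
  obtain T where T: "\<forall>t\<ge>T. norm (h t) < e^2" using tendsto0D[OF h e2] by blast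
  show "\<exists>T. \<forall>t\<ge>T. norm (f t) < e"
  proof (intro exI[of _ "max T c"] allI impI)
    fix t assume t: "max T c \<le> t"
    have tc: "t \<ge> T" "t \<ge> c" using t by auto
    have hn: "norm (h t) < e^2" using T tc(1) by blast
    have bt: "0 \<le> f t \<and> (f t)^2 \<le> h t" using b tc(2) by blast
    have "h t \<le> norm (h t)" by simp
    hence lt: "(f t)^2 < e^2" using hn bt by linarith
    have "f t < e" by (rule power_less_imp_less_base[OF lt]) (use e in simp)
    thus "norm (f t) < e" using bt by simp
  qed
qed


theorem theorem1:
  fixes n :: nat
    and M :: "nat \<Rightarrow> real^'m \<Rightarrow> real^'m^'m"
    and M' :: "nat \<Rightarrow> real^'m \<Rightarrow> real^'m \<Rightarrow> real^'m^'m"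
    and C :: "nat \<Rightarrow> real^'m \<Rightarrow> real^'m \<Rightarrow> real^'m^'m"
    and X :: "nat \<Rightarrow> (real^'m) set"
    and E :: "nat set set"
    and a :: "nat \<Rightarrow> nat \<Rightarrow> real"
    and k k_C :: real
    and q dq ddq :: "nat \<Rightarrow> real \<Rightarrow> real^'m"
  defines "V \<equiv> {1..n}"
  defines "X0 \<equiv> (\<Inter>i\<in>{1..n}. X i)"
  assumes n_pos: "n \<ge> 1"
    (* inertia matrices: symmetric positive definite, bounded, differentiable *)
    and M_sym: "\<And>i x. i \<in> V \<Longrightarrow> transpose (M i x) = M i x"
    and M_pd: "\<And>i x v. i \<in> V \<Longrightarrow> v \<noteq> 0 \<Longrightarrow> v \<bullet> (M i x *v v) > 0"
    and M_bdd: "\<And>i. i \<in> V \<Longrightarrow> bounded (range (M i))"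
    and M_deriv: "\<And>i x. i \<in> V \<Longrightarrow> (M i has_derivative M' i x) (at x)"
    (* Mdot - 2C skew symmetric, with Mdot = DM(q)[qdot] *)
    and skew: "\<And>i x v. i \<in> V \<Longrightarrow>
        transpose (M' i x v - 2 *\<^sub>R C i x v) = - (M' i x v - 2 *\<^sub>R C i x v)"
    and kC_pos: "k_C > 0"
    and C_bound: "\<And>i x v. i \<in> V \<Longrightarrow> mnorm (C i x v) \<le> k_C * norm v"
    and C_bdd: "\<And>i v. i \<in> V \<Longrightarrow> bounded (range (\<lambda>x. C i x v))"
    (* constraint sets *)
    and X_closed: "\<And>i. i \<in> V \<Longrightarrow> closed (X i)"
    and X_convex: "\<And>i. i \<in> V \<Longrightarrow> convex (X i)"
    and X0_ne: "X0 \<noteq> {}"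
    and X0_bdd: "bounded X0"
    (* undirected graph with symmetric positive weights *)
    and E_edges: "\<And>e. e \<in> E \<Longrightarrow> \<exists>i j. e = {i, j} \<and> i \<in> V \<and> j \<in> V \<and> i \<noteq> j"
    and a_sym: "\<And>i j. {i, j} \<in> E \<Longrightarrow> a i j = a j i"
    and a_pos: "\<And>i j. {i, j} \<in> E \<Longrightarrow> a i j > 0"
    and k_pos: "k > 0"
    and conn: "graph_connected V E"
    (* q is a solution of the closed-loop system on [0, \<infinity>) *)
    and q_deriv: "\<And>i t. i \<in> V \<Longrightarrow> t \<ge> 0 \<Longrightarrow>
        (q i has_vector_derivative dq i t) (at t within {0..})"
    and dq_deriv: "\<And>i t. i \<in> V \<Longrightarrow> t \<ge> 0 \<Longrightarrow>
        (dq i has_vector_derivative ddq i t) (at t within {0..})"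
    and dyn: "\<And>i t. i \<in> V \<Longrightarrow> t \<ge> 0 \<Longrightarrow>
        M i (q i t) *v ddq i t + C i (q i t) (dq i t) *v dq i t =
          - k *\<^sub>R dq i t - (q i t - closest_point (X i) (q i t))
          - (\<Sum>j\<in>nbrs E i. a i j *\<^sub>R (q i t - q j t))"
  shows "(\<forall>i\<in>V. ((\<lambda>t. infdist (q i t) X0) \<longlongrightarrow> 0) at_top)
       \<and> (\<forall>i\<in>V. \<forall>j\<in>V. ((\<lambda>t. q i t - q j t) \<longlongrightarrow> 0) at_top)
       \<and> (\<forall>i\<in>V. (dq i \<longlongrightarrow> 0) at_top)"
proof -
  have finV: "finite V" unfolding V_def by simp
  have V1: "1 \<in> V" using n_pos unfolding V_def by simp
  have X0V: "X0 = (\<Inter>i\<in>V. X i)" unfolding X0_def V_def ..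
  obtain x0 where x0: "x0 \<in> X0" using X0_ne by blast
  have x0i: "x0 \<in> X i" if "i \<in> V" for i using x0 that unfolding X0V by blast
  have Xne: "X i \<noteq> {}" if "i \<in> V" for i using x0i[OF that] by blast
  have edgeV: "j \<in> V \<and> i \<in> V" if e: "{j,i} \<in> E" for i j
  proof -
    obtain u w where uw: "{j,i} = {u,w}" "u \<in> V" "w \<in> V" using E_edges[OF e] by blast
    have "j \<in> {u,w}" "i \<in> {u,w}" using uw(1)[symmetric] by auto
    thus ?thesis using uw(2,3) by auto
  qed
  have nbV: "nbrs E i = {j\<in>V. {j,i}\<in>E}" for i unfolding nbrs_def using edgeV by auto
  have finN: "finite (nbrs E i)" for i unfolding nbV using finV by simp
  have asym: "a i j = a j i" if "{j,i} \<in> E" for i j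
    using a_sym[of j i] that by simp
  define P where "P i x = closest_point (X i) x" for i x
  define g where "g i t = (q i t - P i (q i t)) + (\<Sum>j\<in>nbrs E i. a i j *\<^sub>R (q i t - q j t))" for i t
  have dyn2: "M i (q i t) *v ddq i t = - (k *\<^sub>R dq i t) - C i (q i t) (dq i t) *v dq i t - g i t"
    if "i \<in> V" "t \<ge> 0" for i t
    using dyn[OF that] unfolding g_def P_def by (simp add: algebra_simps)
  have qd: "(q i has_vector_derivative dq i t) (at t)" if "i \<in> V" "t > 0" for i t
  proof -
    have "at t within {0..} = at t" using that(2) by (intro at_within_interior) simp
    thus ?thesis using q_deriv[OF that(1), of t] that(2) by simp
  qed
  have dqd: "(dq i has_vector_derivative ddq i t) (at t)" if "i \<in> V" "t > 0" for i t
  proof -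
    have "at t within {0..} = at t" using that(2) by (intro at_within_interior) simp
    thus ?thesis using dq_deriv[OF that(1), of t] that(2) by simp
  qed
  define W where "W t = (\<Sum>i\<in>V. (dq i t \<bullet> (M i (q i t) *v dq i t)) / 2 + (norm (q i t - P i (q i t)))^2 / 2)
        + (\<Sum>i\<in>V. \<Sum>j\<in>nbrs E i. a i j * ((q i t - q j t) \<bullet> (q i t - q j t)) / 4)" for t
  have Wd: "(W has_real_derivative (- k * (\<Sum>i\<in>V. (norm (dq i t))^2))) (at t)" if t: "t > 0" for t
  proof -
    define Kd where "Kd i = dq i t \<bullet> (M i (q i t) *v ddq i t + M' i (q i t) (dq i t) *v dq i t)
        + ddq i t \<bullet> (M i (q i t) *v dq i t)" for i
    define Sd where "Sd i = 2 * ((q i t - P i (q i t)) \<bullet> dq i t)" for i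
    define Ed where "Ed i j = (q i t - q j t) \<bullet> (dq i t - dq j t) + (dq i t - dq j t) \<bullet> (q i t - q j t)" for i j
    have K: "((\<lambda>s. dq i s \<bullet> (M i (q i s) *v dq i s)) has_real_derivative Kd i) (at t)" if i: "i \<in> V" for i
    proof -
      have Nd: "((\<lambda>s. M i (q i s)) has_vector_derivative M' i (q i t) (dq i t)) (at t)"
        by (rule chain_vd[OF qd[OF i t] M_deriv[OF i]])
      have Mv: "((\<lambda>s. M i (q i s) *v dq i s) has_vector_derivative
          (M i (q i t) *v ddq i t + M' i (q i t) (dq i t) *v dq i t)) (at t)"
        using bounded_bilinear.has_vector_derivative[OF bb_mv Nd dqd[OF i t]] by simp
      show ?thesis unfolding has_real_derivative_iff_has_vector_derivative Kd_def
        using bounded_bilinear.has_vector_derivative[OF bounded_bilinear_inner dqd[OF i t] Mv] by simp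
    qed
    have S: "((\<lambda>s. (norm (q i s - P i (q i s)))^2) has_real_derivative Sd i) (at t)" if i: "i \<in> V" for i
      unfolding has_real_derivative_iff_has_vector_derivative Sd_def P_def
      using chain_vd[OF qd[OF i t] sqdist_deriv[OF X_closed[OF i] X_convex[OF i] Xne[OF i]]] by simp
    have Ed: "((\<lambda>s. (q i s - q j s) \<bullet> (q i s - q j s)) has_real_derivative Ed i j) (at t)"
      if i: "i \<in> V" and j: "j \<in> V" for i j
    proof -
      have dd: "((\<lambda>s. q i s - q j s) has_vector_derivative (dq i t - dq j t)) (at t)"
        by (rule has_vector_derivative_diff[OF qd[OF i t] qd[OF j t]])
      show ?thesis unfolding has_real_derivative_iff_has_vector_derivative Ed_def
        using bounded_bilinear.has_vector_derivative[OF bounded_bilinear_inner dd dd] by simp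
    qed
    have W1: "(W has_real_derivative (\<Sum>i\<in>V. Kd i / 2 + Sd i / 2)
          + (\<Sum>i\<in>V. \<Sum>j\<in>nbrs E i. a i j * Ed i j / 4)) (at t)"
      unfolding W_def
    proof (rule DERIV_add)
      show "((\<lambda>x. \<Sum>i\<in>V. dq i x \<bullet> (M i (q i x) *v dq i x) / 2 + (norm (q i x - P i (q i x)))\<^sup>2 / 2)
          has_real_derivative (\<Sum>i\<in>V. Kd i / 2 + Sd i / 2)) (at t)"
        by (rule DERIV_sum, rule DERIV_add, rule DERIV_cdivide, rule K, assumption,
            rule DERIV_cdivide, rule S, assumption)
      show "((\<lambda>x. \<Sum>i\<in>V. \<Sum>j\<in>nbrs E i. a i j * ((q i x - q j x) \<bullet> (q i x - q j x)) / 4)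
          has_real_derivative (\<Sum>i\<in>V. \<Sum>j\<in>nbrs E i. a i j * Ed i j / 4)) (at t)"
      proof (rule DERIV_sum, rule DERIV_sum)
        fix i j assume i: "i \<in> V" and j: "j \<in> nbrs E i"
        have jV: "j \<in> V" using j unfolding nbV by simp
        show "((\<lambda>x. a i j * ((q i x - q j x) \<bullet> (q i x - q j x)) / 4) has_real_derivative a i j * Ed i j / 4) (at t)"
          by (rule DERIV_cdivide, rule DERIV_cmult, rule Ed[OF i jV])
      qed
    qed
    have Kd2: "Kd i / 2 + Sd i / 2 = - k * (norm (dq i t))^2
        - (\<Sum>j\<in>nbrs E i. a i j * ((q i t - q j t) \<bullet> dq i t))" if i: "i \<in> V" for i
    proof -
      let ?N = "M i (q i t)" and ?Nd = "M' i (q i t) (dq i t)" and ?C = "C i (q i t) (dq i t)"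
      have s1: "ddq i t \<bullet> (?N *v dq i t) = dq i t \<bullet> (?N *v ddq i t)"
        using sym_quad[OF M_sym[OF i]] .
      have "dq i t \<bullet> ((?Nd - 2 *\<^sub>R ?C) *v dq i t) = 0" by (rule skew_quad[OF skew[OF i]])
      hence s2: "dq i t \<bullet> (?Nd *v dq i t) = 2 * (dq i t \<bullet> (?C *v dq i t))"
        by (simp add: matrix_vector_mult_diff_rdistrib smv inner_diff_right)
      have "Kd i = 2 * (dq i t \<bullet> (?N *v ddq i t + ?C *v dq i t))"
        unfolding Kd_def using s1 s2 by (simp add: inner_add_right)
      also have "?N *v ddq i t + ?C *v dq i t = - (k *\<^sub>R dq i t) - g i t"
        using dyn2[OF i] t by simp
      finally have "Kd i = - 2 * k * (dq i t \<bullet> dq i t) - 2 * (dq i t \<bullet> g i t)"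
        by (simp add: inner_diff_right)
      moreover have "dq i t \<bullet> g i t = (q i t - P i (q i t)) \<bullet> dq i t
          + (\<Sum>j\<in>nbrs E i. a i j * ((q i t - q j t) \<bullet> dq i t))"
        unfolding g_def by (simp add: inner_add_right inner_sum_right inner_commute)
      ultimately show ?thesis unfolding Sd_def dot_square_norm by linarith
    qed
    have Esum: "(\<Sum>i\<in>V. \<Sum>j\<in>nbrs E i. a i j * Ed i j / 4)
        = (\<Sum>i\<in>V. \<Sum>j\<in>nbrs E i. a i j * ((q i t - q j t) \<bullet> dq i t))"
    proof -
      have "(\<Sum>i\<in>V. \<Sum>j\<in>nbrs E i. a i j * Ed i j / 4)
          = (1/2) * ((\<Sum>i\<in>V. \<Sum>j\<in>nbrs E i. a i j * ((q i t - q j t) \<bullet> dq i t))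
             - (\<Sum>i\<in>V. \<Sum>j\<in>nbrs E i. a i j * ((q i t - q j t) \<bullet> dq j t)))"
      proof -
        have pt: "a i j * Ed i j / 4 = (1/2) * (a i j * ((q i t - q j t) \<bullet> dq i t) - a i j * ((q i t - q j t) \<bullet> dq j t))" for i j
        proof -
          have Ed2: "Ed i j = 2 * ((q i t - q j t) \<bullet> dq i t - (q i t - q j t) \<bullet> dq j t)"
            unfolding Ed_def inner_commute[of "dq i t - dq j t"] by (simp add: inner_diff_right)
          have ar: "\<And>(aa::real) X Y. aa * (2 * (X - Y)) / 4 = 1/2 * (aa * X - aa * Y)" by (simp add: field_simps)
          show ?thesis unfolding Ed2 by (rule ar)
        qed
        show ?thesis by (simp only: pt right_diff_distrib sum_subtractf sum_distrib_left)
      qed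
      also have "(\<Sum>i\<in>V. \<Sum>j\<in>nbrs E i. a i j * ((q i t - q j t) \<bullet> dq j t))
          = - (\<Sum>i\<in>V. \<Sum>j\<in>nbrs E i. a i j * ((q i t - q j t) \<bullet> dq i t))"
        unfolding nbV by (rule antisym_sum[OF finV asym])
      finally show ?thesis by simp
    qed
    have "(\<Sum>i\<in>V. Kd i / 2 + Sd i / 2) + (\<Sum>i\<in>V. \<Sum>j\<in>nbrs E i. a i j * Ed i j / 4)
        = - k * (\<Sum>i\<in>V. (norm (dq i t))^2)"
      using Kd2 Esum by (simp add: sum.distrib sum_subtractf sum_distrib_left)
    thus ?thesis using W1 by simp
  qed
  have Mpsd: "0 \<le> v \<bullet> (M i x *v v)" if "i \<in> V" for i x v
    using M_pd[OF that, of v x] by (cases "v = 0") auto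
  have apos: "a i j > 0" if "j \<in> nbrs E i" for i j
    using a_pos[of i j] that unfolding nbrs_def by (simp add: insert_commute)
  define T1 where "T1 i t = (dq i t \<bullet> (M i (q i t) *v dq i t)) / 2 + (norm (q i t - P i (q i t)))^2 / 2" for i t
  define T2 where "T2 i t = (\<Sum>j\<in>nbrs E i. a i j * ((q i t - q j t) \<bullet> (q i t - q j t)) / 4)" for i t
  have Weq: "W t = (\<Sum>i\<in>V. T1 i t) + (\<Sum>i\<in>V. T2 i t)" for t unfolding W_def T1_def T2_def ..
  have T1nn: "0 \<le> T1 i t" if "i \<in> V" for i t unfolding T1_def using Mpsd[OF that] by simp
  have T2term: "0 \<le> a i j * ((q i t - q j t) \<bullet> (q i t - q j t)) / 4" if "j \<in> nbrs E i" for i j t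
    using apos[OF that] by simp
  have T2nn: "0 \<le> T2 i t" for i t unfolding T2_def by (rule sum_nonneg) (use T2term in blast)
  have W0: "0 \<le> W t" for t unfolding Weq using T1nn T2nn by (simp add: sum_nonneg)
  have WT1: "T1 i t \<le> W t" if i: "i \<in> V" for i t
  proof -
    have "T1 i t \<le> (\<Sum>i\<in>V. T1 i t)" by (rule member_le_sum) (use i finV T1nn in auto)
    moreover have "0 \<le> (\<Sum>i\<in>V. T2 i t)" using T2nn by (simp add: sum_nonneg)
    ultimately show ?thesis unfolding Weq by linarith
  qed
  have WT2: "a i j * ((q i t - q j t) \<bullet> (q i t - q j t)) / 4 \<le> W t" if i: "i \<in> V" and j: "j \<in> nbrs E i" for i j t
  proof -
    have "a i j * ((q i t - q j t) \<bullet> (q i t - q j t)) / 4 \<le> T2 i t"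
      unfolding T2_def by (rule member_le_sum) (use j finN T2term in auto)
    also have "T2 i t \<le> (\<Sum>i\<in>V. T2 i t)" by (rule member_le_sum) (use i finV T2nn in auto)
    finally have "a i j * ((q i t - q j t) \<bullet> (q i t - q j t)) / 4 \<le> (\<Sum>i\<in>V. T2 i t)" .
    moreover have "0 \<le> (\<Sum>i\<in>V. T1 i t)" using T1nn by (simp add: sum_nonneg)
    ultimately show ?thesis unfolding Weq by linarith
  qed
  have Wdnp: "- k * (\<Sum>i\<in>V. (norm (dq i t))^2) \<le> 0" for t
    using k_pos by (simp add: sum_nonneg)
  have Wmono: "W u \<le> W s" if "1 \<le> s" "s \<le> u" for s u
    by (rule dec_helper[OF that(2), of W "\<lambda>t. - k * (\<Sum>i\<in>V. (norm (dq i t))^2)"])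
       (use Wd that Wdnp in auto)
  define B where "B = W 1"
  have WB: "W t \<le> B" if "t \<ge> 1" for t unfolding B_def using Wmono[of 1 t] that by simp
  have B0: "0 \<le> B" unfolding B_def by (rule W0)
  have edgeb: "norm (q i t - q j t) \<le> sqrt (4 * B / a i j)" if i: "i \<in> V" and j: "j \<in> nbrs E i" and t: "t \<ge> 1" for i j t
  proof -
    have "a i j * ((q i t - q j t) \<bullet> (q i t - q j t)) / 4 \<le> B" using WT2[OF i j, of t] WB[OF t] by linarith
    hence "a i j * (norm (q i t - q j t))^2 \<le> 4 * B" by (simp add: dot_square_norm)
    hence "(norm (q i t - q j t))^2 \<le> 4 * B / a i j" using apos[OF j] by (simp add: field_simps)
    thus ?thesis by (rule real_le_rsqrt)
  qed
  have pairbd: "\<exists>R. \<forall>t\<ge>1. norm (q i t - q j t) \<le> R" if i: "i \<in> V" and j: "j \<in> V" for i j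
  proof -
    have "(\<lambda>x y. {x, y} \<in> E)\<^sup>*\<^sup>* i j" using conn i j unfolding graph_connected_def by blast
    thus ?thesis
    proof (induction rule: rtranclp_induct)
      case base show ?case by (intro exI[of _ 0]) simp
    next
      case (step y z)
      obtain R where R: "\<forall>t\<ge>1. norm (q i t - q y t) \<le> R" using step.IH by blast
      have yz: "{y, z} \<in> E" using step.hyps(2) .
      have zV: "z \<in> V" using edgeV[of z y] yz by (simp add: insert_commute)
      have yN: "y \<in> nbrs E z" using yz unfolding nbrs_def by simp
      show ?case
      proof (intro exI allI impI)
        fix t :: real assume t: "t \<ge> 1"
        have "norm (q i t - q z t) \<le> norm (q i t - q y t) + norm (q z t - q y t)"
          using norm_triangle_ineq4[of "q i t - q y t" "q z t - q y t"] by simp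
        also have "\<dots> \<le> R + sqrt (4 * B / a z y)" using R t edgeb[OF zV yN t] by (simp add: add_mono)
        finally show "norm (q i t - q z t) \<le> R + sqrt (4 * B / a z y)" .
      qed
    qed
  qed
  have Sb: "norm (q i t - P i (q i t)) \<le> sqrt (2 * B)" if i: "i \<in> V" and t: "t \<ge> 1" for i t
  proof -
    have "(norm (q i t - P i (q i t)))^2 / 2 \<le> W t" using WT1[OF i, of t] Mpsd[OF i, of "dq i t" "q i t"] unfolding T1_def by linarith
    hence "(norm (q i t - P i (q i t)))^2 \<le> 2 * B" using WB[OF t] by simp
    thus ?thesis by (rule real_le_rsqrt)
  qed
  have infdP: "infdist x (X i) = norm (x - P i x)" if "i \<in> V" for i x
    unfolding P_def using infdist_cp[OF X_closed[OF that] Xne[OF that]] by (simp add: dist_norm)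
  obtain D where D: "\<forall>i\<in>V. \<forall>t\<ge>1. infdist (q 1 t) (X i) \<le> D"
  proof -
    have "\<exists>R. \<forall>t\<ge>1. infdist (q 1 t) (X i) \<le> R" if i: "i \<in> V" for i
    proof -
      obtain R where R: "\<forall>t\<ge>1. norm (q 1 t - q i t) \<le> R" using pairbd[OF V1 i] by blast
      show ?thesis
      proof (intro exI allI impI)
        fix t :: real assume t: "t \<ge> 1"
        have "infdist (q 1 t) (X i) \<le> infdist (q i t) (X i) + dist (q 1 t) (q i t)" by (rule infdist_triangle)
        also have "\<dots> \<le> sqrt (2 * B) + R" using Sb[OF i t] R t infdP[OF i] by (simp add: dist_norm add_mono)
        finally show "infdist (q 1 t) (X i) \<le> sqrt (2 * B) + R" .
      qed
    qed
    thus ?thesis using that unif_bound[OF finV, where f="\<lambda>i t. infdist (q 1 t) (X i)" and c=1] by blast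
  qed
  have c1: "(\<Inter>i\<in>V. X i) \<noteq> {}" using X0_ne unfolding X0V .
  have c2: "bounded (\<Inter>i\<in>V. X i)" using X0_bdd unfolding X0V .
  obtain R1 where R1: "\<forall>x. (\<forall>i\<in>V. infdist x (X i) \<le> D) \<longrightarrow> norm x \<le> R1"
    using coercive[OF finV X_closed X_convex c1 c2, where D=D] by blast
  obtain Rq where Rq: "\<forall>i\<in>V. \<forall>t\<ge>1. norm (q i t) \<le> Rq"
  proof -
    have "\<exists>R. \<forall>t\<ge>1. norm (q i t) \<le> R" if i: "i \<in> V" for i
    proof -
      obtain R where R: "\<forall>t\<ge>1. norm (q i t - q 1 t) \<le> R" using pairbd[OF i V1] by blast
      show ?thesis
      proof (intro exI allI impI)
        fix t :: real assume t: "t \<ge> 1"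
        have "\<forall>i\<in>V. infdist (q 1 t) (X i) \<le> D" using D t by blast
        hence "norm (q 1 t) \<le> R1" using R1 by blast
        moreover have "norm (q i t) \<le> norm (q 1 t) + norm (q i t - q 1 t)"
          using norm_triangle_ineq2[of "q i t" "q 1 t"] by simp
        moreover have "norm (q i t - q 1 t) \<le> R" using R t by blast
        ultimately show "norm (q i t) \<le> R1 + R" by linarith
      qed
    qed
    thus ?thesis using that unif_bound[OF finV, where f="\<lambda>i t. norm (q i t)" and c=1] by blast
  qed
  obtain Kb where Kb: "Kb > 0" "\<And>(A::real^'m^'m) v. norm (A *v v) \<le> norm A * norm v * Kb"
    using bounded_bilinear.pos_bounded[OF bb_mv] by auto
  have Mcont: "continuous_on S (M i)" if "i \<in> V" for i S
    by (rule continuous_at_imp_continuous_on)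
       (use has_derivative_continuous[OF M_deriv[OF that]] in auto)
  have mu_ex: "\<exists>\<mu>>0. \<forall>x v. norm x \<le> Rq \<longrightarrow> \<mu> * (norm v)^2 \<le> v \<bullet> (M i x *v v)" if i: "i \<in> V" for i
  proof -
    define K where "K = cball (0::real^'m) Rq \<times> sphere (0::real^'m) 1"
    have cK: "compact K" unfolding K_def by (intro compact_Times compact_cball compact_sphere)
    have cM: "continuous_on K (\<lambda>p. M i (fst p))"
      by (rule continuous_on_compose2[OF Mcont[OF i, of UNIV] continuous_on_fst[OF continuous_on_id]]) auto
    have cMv: "continuous_on K (\<lambda>p. M i (fst p) *v snd p)"
      using bounded_bilinear.continuous_on[OF bb_mv cM continuous_on_snd[OF continuous_on_id]] by simp
    have cont: "continuous_on K (\<lambda>p. snd p \<bullet> (M i (fst p) *v snd p))"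
      by (intro continuous_on_inner cMv continuous_on_snd continuous_on_id)
    have pos: "snd p \<bullet> (M i (fst p) *v snd p) > 0" if "p \<in> K" for p
    proof -
      have "snd p \<noteq> 0" using that unfolding K_def by auto
      thus ?thesis using M_pd[OF i] by blast
    qed
    obtain m where m: "m > 0" "\<forall>p\<in>K. m \<le> snd p \<bullet> (M i (fst p) *v snd p)"
      using pos_min[OF cK cont pos] by blast
    show ?thesis
    proof (intro exI[of _ m] conjI allI impI)
      show "m > 0" by (rule m(1))
      fix x v :: "real^'m" assume x: "norm x \<le> Rq"
      show "m * (norm v)^2 \<le> v \<bullet> (M i x *v v)"
      proof (cases "v = 0")
        case True thus ?thesis by simp
      next
        case False
        define u where "u = (1 / norm v) *\<^sub>R v"
        have "(x, u) \<in> K" unfolding K_def u_def using x False by (simp add: norm_scaleR)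
        hence mu: "m \<le> u \<bullet> (M i x *v u)" using m(2) by fastforce
        have vu: "v = norm v *\<^sub>R u" unfolding u_def using False by simp
        have "v \<bullet> (M i x *v v) = (norm v)^2 * (u \<bullet> (M i x *v u))"
          by (subst (1 2) vu) (simp add: matrix_vector_mult_scaleR power2_eq_square)
        moreover have "m * (norm v)^2 \<le> (norm v)^2 * (u \<bullet> (M i x *v u))"
          using mult_right_mono[OF mu, of "(norm v)^2"] by (simp add: mult.commute)
        ultimately show ?thesis by simp
      qed
    qed
  qed
  have "\<forall>i\<in>V. \<exists>\<mu>>0. \<forall>x v. norm x \<le> Rq \<longrightarrow> \<mu> * (norm v)^2 \<le> v \<bullet> (M i x *v v)" using mu_ex by blast
  from bchoice[OF this] obtain mu where mu: "\<forall>i\<in>V. mu i > 0 \<and> (\<forall>x v. norm x \<le> Rq \<longrightarrow> mu i * (norm v)^2 \<le> v \<bullet> (M i x *v v))"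
    by blast
  have mupos: "mu i > 0" if "i \<in> V" for i using mu that by blast
  have muq: "mu i * (norm v)^2 \<le> v \<bullet> (M i (q i t) *v v)" if "i \<in> V" "t \<ge> 1" for i t v
    using mu that Rq by blast
  have "\<forall>i\<in>V. \<exists>b>0. \<forall>x. norm (M i x) \<le> b"
  proof
    fix i assume i: "i \<in> V"
    obtain b where b: "\<forall>y\<in>range (M i). norm y \<le> b" using M_bdd[OF i] unfolding bounded_iff by blast
    show "\<exists>b>0. \<forall>x. norm (M i x) \<le> b"
    proof (intro exI[of _ "max b 1"] conjI allI)
      fix x
      have "norm (M i x) \<le> b" using b by simp
      thus "norm (M i x) \<le> max b 1" by simp
    qed simp
  qed
  from bchoice[OF this] obtain Mb where Mb: "\<forall>i\<in>V. Mb i > 0 \<and> (\<forall>x. norm (M i x) \<le> Mb i)" by blast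
  define D1 where "D1 i = sqrt (2 * B / mu i)" for i
  have dqb: "norm (dq i t) \<le> D1 i" if i: "i \<in> V" and t: "t \<ge> 1" for i t
  proof -
    have "dq i t \<bullet> (M i (q i t) *v dq i t) / 2 \<le> B"
      using WT1[OF i, of t] WB[OF t] unfolding T1_def by (smt (verit) zero_le_power2 divide_nonneg_nonneg)
    hence "mu i * (norm (dq i t))^2 \<le> 2 * B" using muq[OF i t, of "dq i t"] by linarith
    hence "(norm (dq i t))^2 \<le> 2 * B / mu i" using mupos[OF i] by (simp add: field_simps)
    thus ?thesis unfolding D1_def by (rule real_le_rsqrt)
  qed
  have D1nn: "0 \<le> D1 i" if "i \<in> V" for i unfolding D1_def using B0 mupos[OF that] by simp
  define Gb where "Gb i = sqrt (2 * B) + (\<Sum>j\<in>nbrs E i. a i j) * (2 * Rq)" for i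
  have gb: "norm (g i t) \<le> Gb i" if i: "i \<in> V" and t: "t \<ge> 1" for i t
  proof -
    have "norm (\<Sum>j\<in>nbrs E i. a i j *\<^sub>R (q i t - q j t)) \<le> (\<Sum>j\<in>nbrs E i. norm (a i j *\<^sub>R (q i t - q j t)))"
      by (rule norm_sum)
    also have "\<dots> \<le> (\<Sum>j\<in>nbrs E i. a i j * (2 * Rq))"
    proof (rule sum_mono)
      fix j assume j: "j \<in> nbrs E i"
      have jV: "j \<in> V" using j unfolding nbV by simp
      have "norm (q i t - q j t) \<le> norm (q i t) + norm (q j t)" by (rule norm_triangle_ineq4)
      also have "\<dots> \<le> 2 * Rq"
      proof -
        have "norm (q i t) \<le> Rq" "norm (q j t) \<le> Rq" using Rq i jV t by auto
        thus ?thesis by linarith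
      qed
      finally have "norm (q i t - q j t) \<le> 2 * Rq" .
      thus "norm (a i j *\<^sub>R (q i t - q j t)) \<le> a i j * (2 * Rq)"
        using apos[OF j] by (simp add: mult_left_mono)
    qed
    also have "\<dots> = (\<Sum>j\<in>nbrs E i. a i j) * (2 * Rq)" by (simp add: sum_distrib_right)
    finally have "norm (\<Sum>j\<in>nbrs E i. a i j *\<^sub>R (q i t - q j t)) \<le> (\<Sum>j\<in>nbrs E i. a i j) * (2 * Rq)" .
    moreover have "norm (q i t - P i (q i t)) \<le> sqrt (2 * B)" by (rule Sb[OF i t])
    moreover have "norm (g i t) \<le> norm (q i t - P i (q i t)) + norm (\<Sum>j\<in>nbrs E i. a i j *\<^sub>R (q i t - q j t))"
      unfolding g_def by (rule norm_triangle_ineq)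
    ultimately show ?thesis unfolding Gb_def by linarith
  qed
  have Gbnn: "0 \<le> Gb i" if "i \<in> V" for i using gb[OF that, of 1] norm_ge_zero[of "g i 1"] by linarith
  have Cb: "norm (C i x v *v v) \<le> k_C * (norm v)^2" if i: "i \<in> V" for i x v
  proof -
    have "norm (C i x v *v v) \<le> mnorm (C i x v) * norm v"
      unfolding mnorm_def by (rule onorm) simp
    also have "\<dots> \<le> k_C * norm v * norm v" using C_bound[OF i, of x v] by (simp add: mult_right_mono)
    finally show ?thesis by (simp add: power2_eq_square mult.assoc)
  qed
  define D2 where "D2 i = (k * D1 i + k_C * (D1 i)^2 + Gb i) / mu i" for i
  have ddqb: "norm (ddq i t) \<le> D2 i" if i: "i \<in> V" and t: "t \<ge> 1" for i t
  proof -
    let ?y = "ddq i t"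
    have t0: "t \<ge> 0" using t by simp
    have "norm (M i (q i t) *v ?y) \<le> norm (k *\<^sub>R dq i t) + norm (C i (q i t) (dq i t) *v dq i t) + norm (g i t)"
      unfolding dyn2[OF i t0] by (smt (verit) norm_minus_cancel norm_triangle_ineq4)
    also have "\<dots> \<le> k * D1 i + k_C * (D1 i)^2 + Gb i"
    proof -
      have "norm (k *\<^sub>R dq i t) \<le> k * D1 i" using dqb[OF i t] k_pos by (simp add: mult_left_mono)
      moreover have "k_C * (norm (dq i t))^2 \<le> k_C * (D1 i)^2"
        using dqb[OF i t] kC_pos by (simp add: power_mono)
      ultimately show ?thesis using Cb[OF i, of "q i t" "dq i t"] gb[OF i t] by linarith
    qed
    finally have Ay: "norm (M i (q i t) *v ?y) \<le> k * D1 i + k_C * (D1 i)^2 + Gb i" .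
    have "mu i * (norm ?y)^2 \<le> ?y \<bullet> (M i (q i t) *v ?y)" by (rule muq[OF i t])
    also have "\<dots> \<le> norm ?y * norm (M i (q i t) *v ?y)" by (rule norm_cauchy_schwarz)
    also have "\<dots> \<le> norm ?y * (k * D1 i + k_C * (D1 i)^2 + Gb i)" using Ay by (simp add: mult_left_mono)
    finally have "mu i * (norm ?y)^2 \<le> norm ?y * (k * D1 i + k_C * (D1 i)^2 + Gb i)" .
    hence "mu i * norm ?y \<le> k * D1 i + k_C * (D1 i)^2 + Gb i"
      using Gbnn[OF i] D1nn[OF i] k_pos kC_pos
      by (cases "norm ?y = 0") (auto simp: power2_eq_square mult.assoc)
    thus ?thesis unfolding D2_def using mupos[OF i] by (simp add: field_simps)
  qed
  define Lw where "Lw = Inf (W ` {1..})"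
  have bddW: "bdd_below (W ` {1..})" using W0 by (intro bdd_belowI[of _ 0]) auto
  have Lw_le: "Lw \<le> W t" if "t \<ge> 1" for t unfolding Lw_def by (rule cInf_lower) (use that bddW in auto)
  have Lw_approx: "\<exists>T\<ge>1. W T < Lw + \<eta>" if "\<eta> > 0" for \<eta>
  proof -
    have ne: "W ` {1..} \<noteq> {}" by auto
    have "Inf (W ` {1..}) < Lw + \<eta>" unfolding Lw_def using that by simp
    then obtain w where "w \<in> W ` {1..}" "w < Lw + \<eta>" using cInf_less_iff[OF ne bddW] by blast
    thus ?thesis by auto
  qed
  have dq0: "(dq i \<longlongrightarrow> 0) at_top" if i: "i \<in> V" for i
  proof (rule tendsto0I)
    fix \<epsilon> :: real assume e: "\<epsilon> > 0"
    define D2' where "D2' = max (D2 i) 1"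
    have D2'1: "D2' \<ge> 1" unfolding D2'_def by simp
    define \<delta> where "\<delta> = \<epsilon> / (2 * D2')"
    define c where "c = k * (\<epsilon>/2)^2"
    have dpos: "\<delta> > 0" unfolding \<delta>_def using e D2'1 by simp
    have cpos: "c > 0" unfolding c_def using e k_pos by simp
    obtain T where T: "T \<ge> 1" "W T < Lw + c * \<delta>" using Lw_approx[of "c * \<delta>"] dpos cpos by auto
    show "\<exists>T. \<forall>t\<ge>T. norm (dq i t) < \<epsilon>"
    proof (intro exI[of _ T] allI impI, rule ccontr)
      fix t assume t: "t \<ge> T" and ne: "\<not> norm (dq i t) < \<epsilon>"
      have t1: "t \<ge> 1" using t T by simp
      have big: "\<epsilon>/2 \<le> norm (dq i s)" if s: "t \<le> s" "s \<le> t + \<delta>" for s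
      proof -
        have "norm (dq i s - dq i t) \<le> D2' * (s - t)"
        proof (rule mvt_vec[OF s(1)])
          fix r assume r: "t \<le> r" "r \<le> s"
          show "(dq i has_vector_derivative ddq i r) (at r)" using dqd[OF i] r t1 by simp
          show "norm (ddq i r) \<le> D2'" using ddqb[OF i, of r] r t1 unfolding D2'_def by simp
        qed
        also have "D2' * (s - t) \<le> D2' * \<delta>" using s D2'1 by (simp add: mult_left_mono)
        also have "D2' * \<delta> = \<epsilon> / 2" unfolding \<delta>_def using D2'1 by (simp add: field_simps)
        finally have "norm (dq i s - dq i t) \<le> \<epsilon> / 2" .
        moreover have "norm (dq i t) - norm (dq i s) \<le> norm (dq i s - dq i t)"
          using norm_triangle_ineq2[of "dq i t" "dq i s"] by (simp add: norm_minus_commute)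
        ultimately show ?thesis using ne by linarith
      qed
      have "W (t + \<delta>) + c * (t + \<delta>) \<le> W t + c * t"
      proof (rule dec_helper[of t "t + \<delta>" "\<lambda>s. W s + c * s" "\<lambda>s. - k * (\<Sum>i\<in>V. (norm (dq i s))^2) + c"])
        show "t \<le> t + \<delta>" using dpos by simp
        fix s assume s: "t \<le> s" "s \<le> t + \<delta>"
        show "((\<lambda>s. W s + c * s) has_real_derivative - k * (\<Sum>i\<in>V. (norm (dq i s))\<^sup>2) + c) (at s)"
          using DERIV_add[OF Wd[of s] DERIV_cmult_Id[of c s]] s t1 by simp
        have "(\<epsilon>/2)^2 \<le> (norm (dq i s))^2" using big[OF s] e by (simp add: power_mono)
        also have "(norm (dq i s))^2 \<le> (\<Sum>i\<in>V. (norm (dq i s))^2)"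
          by (rule member_le_sum[of i V "\<lambda>i. (norm (dq i s))^2"]) (use i finV in auto)
        finally have "c \<le> k * (\<Sum>i\<in>V. (norm (dq i s))^2)" unfolding c_def using k_pos
          by (simp add: mult_left_mono)
        thus "- k * (\<Sum>i\<in>V. (norm (dq i s))\<^sup>2) + c \<le> 0" by simp
      qed
      hence "W (t + \<delta>) \<le> W t - c * \<delta>" by (simp add: algebra_simps)
      moreover have "W t \<le> W T" using Wmono[OF T(1) t] .
      moreover have "Lw \<le> W (t + \<delta>)" using Lw_le[of "t + \<delta>"] t1 dpos by simp
      ultimately show False using T(2) by linarith
    qed
  qed
  have g0: "((\<lambda>t. g i t) \<longlongrightarrow> 0) at_top" if i: "i \<in> V" for i
  proof (rule tendsto0I)
    fix \<epsilon> :: real assume e: "\<epsilon> > 0"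
    define D2' where "D2' = max (D2 i) 1"
    have D2'1: "D2' \<ge> 1" unfolding D2'_def by simp
    define eM where "eM = \<epsilon> / (8 * D2' * Kb)"
    have eMpos: "eM > 0" unfolding eM_def using e D2'1 Kb(1) by simp
    have uc: "uniformly_continuous_on (cball 0 Rq) (M i)"
      by (rule compact_uniformly_continuous[OF Mcont[OF i] compact_cball])
    obtain dM where dM: "dM > 0" "\<forall>x\<in>cball 0 Rq. \<forall>x'\<in>cball 0 Rq. dist x' x < dM \<longrightarrow> dist (M i x') (M i x) < eM"
      using uc[unfolded uniformly_continuous_on_def, rule_format, OF eMpos] by blast
    define Sa where "Sa = (\<Sum>j\<in>nbrs E i. a i j)"
    have Sa0: "Sa \<ge> 0" unfolding Sa_def using apos by (simp add: sum_nonneg less_imp_le)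
    define G' where "G' = max (Gb i) 1"
    have G'1: "G' \<ge> 1" unfolding G'_def by simp
    have Mbi: "Mb i > 0" "\<And>x. norm (M i x) \<le> Mb i" using Mb i by auto
    define \<eta> where "\<eta> = min (min 1 (dM/2)) (min (\<epsilon> / (8 * (2 + 2*Sa))) (min (\<epsilon> / (8 * (k + k_C))) (\<epsilon> * \<epsilon> / (8 * (Mb i * Kb * G')))))"
    have Kpos: "Mb i * Kb * G' > 0" using Mbi(1) Kb(1) G'1 by simp
    have eta_pos: "\<eta> > 0" unfolding \<eta>_def using e dM(1) Sa0 k_pos kC_pos Kpos by simp
    have em: "\<eta> \<le> min 1 (dM/2)" "\<eta> \<le> \<epsilon> / (8 * (2 + 2*Sa))" "\<eta> \<le> \<epsilon> / (8 * (k + k_C))"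
      "\<eta> \<le> \<epsilon> * \<epsilon> / (8 * (Mb i * Kb * G'))"
      unfolding \<eta>_def by (meson min.cobounded1 min.cobounded2 order_trans)+
    have eta1: "\<eta> \<le> 1" "\<eta> \<le> dM/2" using em(1) by auto
    have eta2: "\<eta> * (2 + 2*Sa) \<le> \<epsilon> / 8"
    proof -
      have "\<eta> \<le> \<epsilon> / (8 * (2 + 2*Sa))" by (rule em(2))
      thus ?thesis using Sa0 by (simp add: field_simps)
    qed
    have eta3: "\<eta> * (k + k_C) \<le> \<epsilon> / 8"
    proof -
      have "\<eta> \<le> \<epsilon> / (8 * (k + k_C))" by (rule em(3))
      thus ?thesis using k_pos kC_pos by (simp add: field_simps)
    qed
    have eta4: "\<eta> * (Mb i * Kb * G') \<le> \<epsilon> * \<epsilon> / 8"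
    proof -
      have "\<eta> \<le> \<epsilon> * \<epsilon> / (8 * (Mb i * Kb * G'))" by (rule em(4))
      thus ?thesis using Kpos by (simp add: field_simps)
    qed
    have "\<forall>j\<in>V. eventually (\<lambda>t. norm (dq j t) < \<eta>) at_top"
    proof
      fix j assume j: "j \<in> V"
      obtain Tj where "\<forall>t\<ge>Tj. norm (dq j t) < \<eta>" using tendsto0D[OF dq0[OF j] eta_pos] by blast
      thus "eventually (\<lambda>t. norm (dq j t) < \<eta>) at_top" unfolding eventually_at_top_linorder by blast
    qed
    hence "eventually (\<lambda>t. \<forall>j\<in>V. norm (dq j t) < \<eta>) at_top" by (rule eventually_ball_finite[OF finV])
    then obtain T0 where T0: "\<forall>t\<ge>T0. \<forall>j\<in>V. norm (dq j t) < \<eta>" unfolding eventually_at_top_linorder by blast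
    show "\<exists>T. \<forall>t\<ge>T. norm (g i t) < \<epsilon>"
    proof (intro exI[of _ "max T0 1"] allI impI, rule ccontr)
      fix t assume t: "max T0 1 \<le> t" and ne: "\<not> norm (g i t) < \<epsilon>"
      have t1: "t \<ge> 1" and tT0: "t \<ge> T0" using t by auto
      define w where "w = g i t"
      define A0 where "A0 = M i (q i t)"
      define v where "v = A0 *v w"
      have wge: "\<epsilon> \<le> norm w" using ne unfolding w_def by simp
      have wle: "norm w \<le> G'" using gb[OF i t1] unfolding w_def G'_def by simp
      have dqs: "norm (dq j s) < \<eta>" if "j \<in> V" "t \<le> s" for j s using T0 that tT0 by simp
      have mv: "norm (q j s - q j t) \<le> \<eta>" if j: "j \<in> V" and s: "t \<le> s" "s \<le> t + 1" for j s
      proof -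
        have "norm (q j s - q j t) \<le> \<eta> * (s - t)"
        proof (rule mvt_vec[OF s(1)])
          fix r assume r: "t \<le> r" "r \<le> s"
          show "(q j has_vector_derivative dq j r) (at r)" using qd[OF j] r t1 by simp
          show "norm (dq j r) \<le> \<eta>" using dqs[OF j r(1)] by simp
        qed
        also have "\<dots> \<le> \<eta> * 1" using s eta_pos by (intro mult_left_mono) auto
        finally show ?thesis by simp
      qed
      have vb: "norm v \<le> Mb i * Kb * G'"
      proof -
        have "norm v \<le> norm A0 * norm w * Kb" unfolding v_def by (rule Kb(2))
        also have "\<dots> \<le> Mb i * G' * Kb"
          using Mbi Mbi(2)[of "q i t"] wle Kb(1) unfolding A0_def
          by (intro mult_right_mono mult_mono) auto
        finally show ?thesis by (simp add: ac_simps)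
      qed
      have pb: "\<bar>v \<bullet> dq i s\<bar> \<le> \<epsilon> * \<epsilon> / 8" if "t \<le> s" for s
      proof -
        have "\<bar>v \<bullet> dq i s\<bar> \<le> norm v * norm (dq i s)" by (rule Cauchy_Schwarz_ineq2)
        also have "\<dots> \<le> (Mb i * Kb * G') * \<eta>"
          using vb dqs[OF i that] Kpos by (intro mult_mono) auto
        finally show ?thesis using eta4 by (simp add: mult.commute)
      qed
      have pneg: "v \<bullet> ddq i s \<le> - (\<epsilon> * \<epsilon> / 2)" if s: "t \<le> s" "s \<le> t + 1" for s
      proof -
        let ?y = "ddq i s" and ?As = "M i (q i s)"
        have s0: "s \<ge> 0" "s \<ge> 1" using s t1 by auto
        have "v \<bullet> ?y = ?y \<bullet> (A0 *v w)" unfolding v_def by (simp add: inner_commute)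
        also have "\<dots> = w \<bullet> (A0 *v ?y)" unfolding A0_def by (rule sym_quad[OF M_sym[OF i]])
        also have "A0 *v ?y = ?As *v ?y + (A0 - ?As) *v ?y" by (simp add: matrix_vector_mult_diff_rdistrib)
        also have "?As *v ?y = - (k *\<^sub>R dq i s) - C i (q i s) (dq i s) *v dq i s - g i s" by (rule dyn2[OF i s0(1)])
        finally have vy: "v \<bullet> ?y = - (k * (w \<bullet> dq i s) + w \<bullet> (C i (q i s) (dq i s) *v dq i s))
            - (w \<bullet> w + w \<bullet> (g i s - w)) + w \<bullet> ((A0 - ?As) *v ?y)"
          by (simp add: inner_add_right inner_diff_right)
        have nd: "norm (dq i s) \<le> \<eta>" using dqs[OF i s(1)] by simp
        have F1: "\<bar>k * (w \<bullet> dq i s) + w \<bullet> (C i (q i s) (dq i s) *v dq i s)\<bar> \<le> norm w * \<epsilon> / 8"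
        proof -
          have a1: "\<bar>w \<bullet> dq i s\<bar> \<le> norm w * \<eta>"
            using Cauchy_Schwarz_ineq2[of w "dq i s"] nd by (smt (verit) mult_left_mono norm_ge_zero)
          have "norm (dq i s) * norm (dq i s) \<le> \<eta> * 1"
            by (rule mult_mono) (use nd eta1(1) eta_pos in auto)
          hence "(norm (dq i s))^2 \<le> \<eta> * 1" by (simp add: power2_eq_square)
          hence "k_C * (norm (dq i s))^2 \<le> k_C * \<eta>" using kC_pos by (simp add: mult_left_mono)
          hence cb: "norm (C i (q i s) (dq i s) *v dq i s) \<le> k_C * \<eta>" using Cb[OF i, of "q i s" "dq i s"] by linarith
          have a2: "\<bar>w \<bullet> (C i (q i s) (dq i s) *v dq i s)\<bar> \<le> norm w * (k_C * \<eta>)"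
            using Cauchy_Schwarz_ineq2[of w "C i (q i s) (dq i s) *v dq i s"] cb
            by (smt (verit) mult_left_mono norm_ge_zero)
          have "\<bar>k * (w \<bullet> dq i s)\<bar> \<le> k * (norm w * \<eta>)" using a1 k_pos by (simp add: abs_mult mult_left_mono)
          hence "\<bar>k * (w \<bullet> dq i s) + w \<bullet> (C i (q i s) (dq i s) *v dq i s)\<bar> \<le> norm w * (\<eta> * (k + k_C))"
            using a2 by (simp add: algebra_simps)
          also have "\<dots> \<le> norm w * (\<epsilon> / 8)" by (rule mult_left_mono[OF eta3 norm_ge_zero])
          finally show ?thesis by simp
        qed
        have F3: "\<bar>w \<bullet> (g i s - w)\<bar> \<le> norm w * \<epsilon> / 8"
        proof -
          have "g i s - w = ((q i s - q i t) - (P i (q i s) - P i (q i t)))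
              + (\<Sum>j\<in>nbrs E i. a i j *\<^sub>R ((q i s - q i t) - (q j s - q j t)))"
          proof -
            have sd: "(\<Sum>j\<in>nbrs E i. a i j *\<^sub>R ((q i s - q i t) - (q j s - q j t)))
                = (\<Sum>j\<in>nbrs E i. a i j *\<^sub>R (q i s - q j s)) - (\<Sum>j\<in>nbrs E i. a i j *\<^sub>R (q i t - q j t))"
              by (simp add: sum_subtractf[symmetric] algebra_simps)
            show ?thesis unfolding w_def g_def sd by (simp add: algebra_simps)
          qed
          hence "norm (g i s - w) \<le> norm ((q i s - q i t) - (P i (q i s) - P i (q i t)))
              + norm (\<Sum>j\<in>nbrs E i. a i j *\<^sub>R ((q i s - q i t) - (q j s - q j t)))"
            by (simp add: norm_triangle_ineq)
          moreover have "norm ((q i s - q i t) - (P i (q i s) - P i (q i t))) \<le> 2 * \<eta>"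
          proof -
            have "norm (P i (q i s) - P i (q i t)) \<le> norm (q i s - q i t)"
              using closest_point_lipschitz[OF X_convex[OF i] X_closed[OF i] Xne[OF i]]
              unfolding P_def dist_norm by blast
            thus ?thesis using mv[OF i s] norm_triangle_ineq4[of "q i s - q i t" "P i (q i s) - P i (q i t)"] by linarith
          qed
          moreover have "norm (\<Sum>j\<in>nbrs E i. a i j *\<^sub>R ((q i s - q i t) - (q j s - q j t))) \<le> Sa * (2 * \<eta>)"
          proof -
            have "norm (\<Sum>j\<in>nbrs E i. a i j *\<^sub>R ((q i s - q i t) - (q j s - q j t)))
                \<le> (\<Sum>j\<in>nbrs E i. norm (a i j *\<^sub>R ((q i s - q i t) - (q j s - q j t))))" by (rule norm_sum)
            also have "\<dots> \<le> (\<Sum>j\<in>nbrs E i. a i j * (2 * \<eta>))"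
            proof (rule sum_mono)
              fix j assume j: "j \<in> nbrs E i"
              have jV: "j \<in> V" using j unfolding nbV by simp
              have "norm ((q i s - q i t) - (q j s - q j t)) \<le> 2 * \<eta>"
                using mv[OF i s] mv[OF jV s] norm_triangle_ineq4[of "q i s - q i t" "q j s - q j t"] by linarith
              thus "norm (a i j *\<^sub>R ((q i s - q i t) - (q j s - q j t))) \<le> a i j * (2 * \<eta>)"
                using apos[OF j] by (simp add: mult_left_mono)
            qed
            also have "\<dots> = Sa * (2 * \<eta>)" unfolding Sa_def by (simp add: sum_distrib_right)
            finally show ?thesis .
          qed
          ultimately have "norm (g i s - w) \<le> \<eta> * (2 + 2 * Sa)" by (simp add: algebra_simps)
          hence "norm (g i s - w) \<le> \<epsilon> / 8" using eta2 by linarith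
          hence "norm w * norm (g i s - w) \<le> norm w * (\<epsilon> / 8)" by (rule mult_left_mono[OF _ norm_ge_zero])
          thus ?thesis using Cauchy_Schwarz_ineq2[of w "g i s - w"] by simp
        qed
        have F4: "\<bar>w \<bullet> ((A0 - ?As) *v ?y)\<bar> \<le> norm w * \<epsilon> / 8"
        proof -
          have qin: "q i t \<in> cball 0 Rq" "q i s \<in> cball 0 Rq" using Rq i t1 s0(2) by auto
          have "dist (q i t) (q i s) < dM" using mv[OF i s] eta1(2) dM(1) by (simp add: dist_norm norm_minus_commute)
          hence "dist (M i (q i t)) (M i (q i s)) < eM" using dM(2) qin by blast
          hence nA: "norm (A0 - ?As) \<le> eM" unfolding A0_def dist_norm by simp
          have ny: "norm ?y \<le> D2'" using ddqb[OF i s0(2)] unfolding D2'_def by simp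
          have "norm ((A0 - ?As) *v ?y) \<le> norm (A0 - ?As) * norm ?y * Kb" by (rule Kb(2))
          also have "\<dots> \<le> eM * D2' * Kb" using nA ny Kb(1) eMpos by (intro mult_right_mono mult_mono) auto
          also have "\<dots> = \<epsilon> / 8" unfolding eM_def using D2'1 Kb(1) by (simp add: field_simps)
          finally have "norm ((A0 - ?As) *v ?y) \<le> \<epsilon> / 8" .
          hence "norm w * norm ((A0 - ?As) *v ?y) \<le> norm w * (\<epsilon> / 8)" by (rule mult_left_mono[OF _ norm_ge_zero])
          thus ?thesis using Cauchy_Schwarz_ineq2[of w "(A0 - ?As) *v ?y"] by simp
        qed
        have ww: "w \<bullet> w = norm w * norm w" by (simp add: dot_square_norm power2_eq_square)
        have F5: "\<epsilon> * \<epsilon> \<le> norm w * \<epsilon>" "norm w * \<epsilon> \<le> norm w * norm w"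
          using wge e by (auto intro: mult_right_mono mult_left_mono)
        show ?thesis using vy F1 F3 F4 F5 ww by linarith
      qed
      have "v \<bullet> dq i (t + 1) + (\<epsilon> * \<epsilon> / 2) * (t + 1) \<le> v \<bullet> dq i t + (\<epsilon> * \<epsilon> / 2) * t"
      proof (rule dec_helper[of t "t + 1" "\<lambda>s. v \<bullet> dq i s + (\<epsilon> * \<epsilon> / 2) * s" "\<lambda>s. v \<bullet> ddq i s + \<epsilon> * \<epsilon> / 2"])
        fix s assume s: "t \<le> s" "s \<le> t + 1"
        have "((\<lambda>s. v \<bullet> dq i s) has_real_derivative v \<bullet> ddq i s) (at s)"
          unfolding has_real_derivative_iff_has_vector_derivative
          using bounded_linear.has_vector_derivative[OF bounded_linear_inner_right dqd[OF i, of s]] s t1 by simp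
        thus "((\<lambda>s. v \<bullet> dq i s + (\<epsilon> * \<epsilon> / 2) * s) has_real_derivative v \<bullet> ddq i s + \<epsilon> * \<epsilon> / 2) (at s)"
          using DERIV_add[OF _ DERIV_cmult_Id[of "\<epsilon> * \<epsilon> / 2" s]] by simp
        show "v \<bullet> ddq i s + \<epsilon> * \<epsilon> / 2 \<le> 0" using pneg[OF s] by simp
      qed simp
      moreover have "(\<epsilon> * \<epsilon> / 2) * (t + 1) = (\<epsilon> * \<epsilon> / 2) * t + \<epsilon> * \<epsilon> / 2" by (simp add: distrib_left)
      ultimately have "v \<bullet> dq i t - v \<bullet> dq i (t + 1) \<ge> \<epsilon> * \<epsilon> / 2" by linarith
      moreover have "\<bar>v \<bullet> dq i t\<bar> \<le> \<epsilon> * \<epsilon> / 8" "\<bar>v \<bullet> dq i (t + 1)\<bar> \<le> \<epsilon> * \<epsilon> / 8" using pb by auto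
      moreover have "\<epsilon> * \<epsilon> > 0" using e by simp
      ultimately show False by linarith
    qed
  qed
  define cX where "cX = Rq + norm x0"
  define hs where "hs t = (\<Sum>i\<in>V. norm (g i t) * cX)" for t
  have hs0: "(hs \<longlongrightarrow> 0) at_top" unfolding hs_def
    by (rule tendsto_null_sum, rule tendsto_mult_left_zero, rule tendsto_norm_zero, rule g0) simp
  define ES where "ES t = (\<Sum>i\<in>V. \<Sum>j\<in>nbrs E i. a i j * ((q i t - q j t) \<bullet> (q i t - q j t)))" for t
  have ESnn: "0 \<le> ES t" for t unfolding ES_def
    by (intro sum_nonneg) (use apos in \<open>simp add: less_imp_le\<close>)
  have Fbound: "(\<Sum>i\<in>V. (norm (q i t - P i (q i t)))^2) + ES t / 2 \<le> hs t" if t: "t \<ge> 1" for t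
  proof -
    have id: "(\<Sum>i\<in>V. g i t \<bullet> (q i t - x0)) = (\<Sum>i\<in>V. (q i t - P i (q i t)) \<bullet> (q i t - x0))
        + (\<Sum>i\<in>V. \<Sum>j\<in>nbrs E i. a i j * ((q i t - q j t) \<bullet> (q i t - x0)))"
      unfolding g_def by (simp add: inner_add_left inner_sum_left sum.distrib)
    have proj: "(norm (q i t - P i (q i t)))^2 \<le> (q i t - P i (q i t)) \<bullet> (q i t - x0)" if i: "i \<in> V" for i
    proof -
      have "(q i t - P i (q i t)) \<bullet> (x0 - P i (q i t)) \<le> 0" unfolding P_def
        by (rule closest_point_dot[OF X_convex[OF i] X_closed[OF i] x0i[OF i]])
      moreover have "(q i t - P i (q i t)) \<bullet> (q i t - x0) = (q i t - P i (q i t)) \<bullet> (q i t - P i (q i t))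
          - (q i t - P i (q i t)) \<bullet> (x0 - P i (q i t))" by (simp add: inner_diff_right)
      moreover have "(q i t - P i (q i t)) \<bullet> (q i t - P i (q i t)) = (norm (q i t - P i (q i t)))^2"
        by (simp add: dot_square_norm)
      ultimately show ?thesis by linarith
    qed
    have edge: "(\<Sum>i\<in>V. \<Sum>j\<in>nbrs E i. a i j * ((q i t - q j t) \<bullet> (q i t - x0))) = ES t / 2"
    proof -
      have A: "(\<Sum>i\<in>V. \<Sum>j\<in>nbrs E i. a i j * ((q i t - q j t) \<bullet> (q j t - x0)))
          = - (\<Sum>i\<in>V. \<Sum>j\<in>nbrs E i. a i j * ((q i t - q j t) \<bullet> (q i t - x0)))"
        unfolding nbV by (rule antisym_sum[OF finV asym, where x="\<lambda>i. q i t" and z="\<lambda>i. q i t - x0"])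
      have B: "ES t = (\<Sum>i\<in>V. \<Sum>j\<in>nbrs E i. a i j * ((q i t - q j t) \<bullet> (q i t - x0)))
          - (\<Sum>i\<in>V. \<Sum>j\<in>nbrs E i. a i j * ((q i t - q j t) \<bullet> (q j t - x0)))"
        unfolding ES_def
        by (simp only: sum_subtractf[symmetric], rule sum.cong[OF refl], rule sum.cong[OF refl])
           (simp add: inner_diff_right algebra_simps)
      show ?thesis using A B by linarith
    qed
    have "(\<Sum>i\<in>V. (norm (q i t - P i (q i t)))^2) \<le> (\<Sum>i\<in>V. (q i t - P i (q i t)) \<bullet> (q i t - x0))"
      by (rule sum_mono) (rule proj)
    moreover have "(\<Sum>i\<in>V. g i t \<bullet> (q i t - x0)) \<le> hs t" unfolding hs_def
    proof (rule sum_mono)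
      fix i assume i: "i \<in> V"
      have "norm (q i t - x0) \<le> cX" unfolding cX_def
        using norm_triangle_ineq4[of "q i t" x0] Rq i t by fastforce
      hence "norm (g i t) * norm (q i t - x0) \<le> norm (g i t) * cX" by (rule mult_left_mono) simp
      thus "g i t \<bullet> (q i t - x0) \<le> norm (g i t) * cX"
        using norm_cauchy_schwarz[of "g i t" "q i t - x0"] by linarith
    qed
    ultimately show ?thesis using id edge by linarith
  qed
  have Sq0: "((\<lambda>t. norm (q i t - P i (q i t))) \<longlongrightarrow> 0) at_top" if i: "i \<in> V" for i
  proof (rule sandwich0[OF hs0, where c=1])
    fix t :: real assume t: "t \<ge> 1"
    have "(norm (q i t - P i (q i t)))^2 \<le> (\<Sum>i\<in>V. (norm (q i t - P i (q i t)))^2)"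
      by (rule member_le_sum[of i V "\<lambda>i. (norm (q i t - P i (q i t)))^2"]) (use i finV in auto)
    thus "0 \<le> norm (q i t - P i (q i t)) \<and> (norm (q i t - P i (q i t)))^2 \<le> hs t"
      using Fbound[OF t] ESnn[of t] by simp
  qed
  have Ed0: "((\<lambda>t. norm (q i t - q j t)) \<longlongrightarrow> 0) at_top" if i: "i \<in> V" and j: "j \<in> nbrs E i" for i j
  proof (rule sandwich0[OF tendsto_mult_right_zero[OF hs0, of "2 / a i j"], where c=1])
    fix t :: real assume t: "t \<ge> 1"
    have ap: "a i j > 0" by (rule apos[OF j])
    have "a i j * ((q i t - q j t) \<bullet> (q i t - q j t)) \<le> (\<Sum>j\<in>nbrs E i. a i j * ((q i t - q j t) \<bullet> (q i t - q j t)))"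
      by (rule member_le_sum[of j "nbrs E i" "\<lambda>j. a i j * ((q i t - q j t) \<bullet> (q i t - q j t))"])
         (use j finN apos in \<open>auto simp: less_imp_le\<close>)
    also have "\<dots> \<le> ES t" unfolding ES_def
      by (rule member_le_sum[of i V "\<lambda>i. \<Sum>j\<in>nbrs E i. a i j * ((q i t - q j t) \<bullet> (q i t - q j t))"])
         (use i finV apos in \<open>auto intro!: sum_nonneg simp: less_imp_le\<close>)
    also have "ES t \<le> 2 * hs t" using Fbound[OF t] sum_nonneg[of V "\<lambda>i. (norm (q i t - P i (q i t)))^2"] by simp
    finally have "a i j * (norm (q i t - q j t))^2 \<le> 2 * hs t" by (simp add: dot_square_norm)
    hence "(norm (q i t - q j t))^2 \<le> 2 / a i j * hs t" using ap by (simp add: field_simps)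
    thus "0 \<le> norm (q i t - q j t) \<and> (norm (q i t - q j t))^2 \<le> 2 / a i j * hs t" by simp
  qed
  have qq0: "((\<lambda>t. q i t - q j t) \<longlongrightarrow> 0) at_top" if i: "i \<in> V" and j: "j \<in> V" for i j
  proof -
    have "(\<lambda>x y. {x, y} \<in> E)\<^sup>*\<^sup>* i j" using conn i j unfolding graph_connected_def by blast
    thus ?thesis
    proof (induction rule: rtranclp_induct)
      case base show ?case by simp
    next
      case (step y z)
      have yz: "{y, z} \<in> E" using step.hyps(2) .
      have zV: "z \<in> V" using edgeV[of z y] yz by (simp add: insert_commute)
      have yN: "y \<in> nbrs E z" using yz unfolding nbrs_def by simp
      have "((\<lambda>t. q z t - q y t) \<longlongrightarrow> 0) at_top"
        using Ed0[OF zV yN] by (simp add: tendsto_norm_zero_iff)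
      hence "((\<lambda>t. (q i t - q y t) - (q z t - q y t)) \<longlongrightarrow> 0 - 0) at_top"
        by (intro tendsto_diff step.IH)
      thus ?case by simp
    qed
  qed
  have id0: "((\<lambda>t. infdist (q i t) X0) \<longlongrightarrow> 0) at_top" if i: "i \<in> V" for i
  proof -
    have ij0: "((\<lambda>t. infdist (q i t) (X j)) \<longlongrightarrow> 0) at_top" if j: "j \<in> V" for j
    proof (rule tendsto_sandwich[of "\<lambda>t. 0" _ _ "\<lambda>t. norm (q i t - q j t) + norm (q j t - P j (q j t))"])
      show "\<forall>\<^sub>F t in at_top. 0 \<le> infdist (q i t) (X j)" by (simp add: infdist_nonneg)
      show "\<forall>\<^sub>F t in at_top. infdist (q i t) (X j) \<le> norm (q i t - q j t) + norm (q j t - P j (q j t))"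
      proof (rule always_eventually, rule allI)
        fix t
        have "infdist (q i t) (X j) \<le> infdist (q j t) (X j) + dist (q i t) (q j t)" by (rule infdist_triangle)
        thus "infdist (q i t) (X j) \<le> norm (q i t - q j t) + norm (q j t - P j (q j t))"
          using infdP[OF j, of "q j t"] by (simp add: dist_norm)
      qed
      show "((\<lambda>t. 0) \<longlongrightarrow> (0::real)) at_top" by simp
      have "((\<lambda>t. norm (q i t - q j t) + norm (q j t - P j (q j t))) \<longlongrightarrow> 0 + 0) at_top"
        by (intro tendsto_add tendsto_norm_zero qq0[OF i j]) (use Sq0[OF j] in \<open>simp add: tendsto_norm_zero_iff\<close>)
      thus "((\<lambda>t. norm (q i t - q j t) + norm (q j t - P j (q j t))) \<longlongrightarrow> 0) at_top" by simp
    qed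
    define H where "H x = (\<Sum>j\<in>V. infdist x (X j))" for x
    have H0: "((\<lambda>t. H (q i t)) \<longlongrightarrow> 0) at_top" unfolding H_def
      by (rule tendsto_null_sum) (rule ij0)
    show ?thesis
    proof (rule tendsto0I)
      fix \<epsilon> :: real assume e: "\<epsilon> > 0"
      define K where "K = cball 0 Rq \<inter> {x. \<epsilon> \<le> infdist x X0}"
      have cK: "compact K" unfolding K_def
        by (intro compact_Int_closed compact_cball closed_Collect_le continuous_on_const
            continuous_on_infdist continuous_on_id)
      have cH: "continuous_on K H" unfolding H_def by (intro continuous_intros)
      have Hpos: "H x > 0" if x: "x \<in> K" for x
      proof (rule ccontr)
        assume "\<not> H x > 0"
        moreover have "H x \<ge> 0" unfolding H_def by (simp add: sum_nonneg infdist_nonneg)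
        ultimately have "H x = 0" by linarith
        hence all0: "\<forall>j\<in>V. infdist x (X j) = 0" unfolding H_def
          by (subst (asm) sum_nonneg_eq_0_iff[OF finV]) (auto simp: infdist_nonneg)
        have "x \<in> X j" if j: "j \<in> V" for j
          using in_closed_iff_infdist_zero[OF X_closed[OF j] Xne[OF j], of x] all0 j by simp
        hence "x \<in> X0" unfolding X0V by blast
        hence "infdist x X0 = 0" by simp
        thus False using x e unfolding K_def by simp
      qed
      obtain m where m: "m > 0" "\<forall>x\<in>K. m \<le> H x" using pos_min[OF cK cH Hpos] by blast
      obtain T where T: "\<forall>t\<ge>T. norm (H (q i t)) < m" using tendsto0D[OF H0 m(1)] by blast
      show "\<exists>T. \<forall>t\<ge>T. norm (infdist (q i t) X0) < \<epsilon>"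
      proof (intro exI[of _ "max T 1"] allI impI)
        fix t assume t: "max T 1 \<le> t"
        have hl: "norm (H (q i t)) < m" using T t by simp
        have qb: "q i t \<in> cball 0 Rq" using Rq i t by simp
        have "\<not> \<epsilon> \<le> infdist (q i t) X0"
        proof
          assume "\<epsilon> \<le> infdist (q i t) X0"
          hence "q i t \<in> K" unfolding K_def using qb by simp
          hence "m \<le> H (q i t)" using m(2) by blast
          thus False using hl by simp
        qed
        thus "norm (infdist (q i t) X0) < \<epsilon>" by (simp add: infdist_nonneg)
      qed
    qed
  qed
  show ?thesis using id0 qq0 dq0 by blast
qed

end
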